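(* Let $f,g\in C_c^\infty(\mathbb{R}^n)$ be nonnegative and let $\mathcal{M}$ be the bilinear maximal operator with $\alpha=-1$, i.e. $\mathcal{M}(f,g)(x)=\sup_{R>0}\frac{1}{m(B_R)}\int_{B_R}f(x+z)g(x-z)\,dz$. Then for all $x,y\in\mathbb{R}^n$, $$|\mathcal{M}(f,g)(x)-\mathcal{M}(f,g)(y)|\le \int_{\overline{xy}}\Big\{\mathcal{M}(f,|\nabla g|)+\mathcal{M}(|\nabla f|,g)\Big\}\,d\mathcal{H}^1,$$ where $\overline{xy}$ is the line segment from $x$ to $y$ and $\mathcal{H}^1$ is one-dimensional Hausdorff measure.
   Context: $B_R$ is the ball of radius $R$ centered at the origin, $m$ is Lebesgue measure on $\mathbb{R}^n$; for general (possibly sign-changing) arguments $\mathcal{M}(f,g)(x)=\sup_{R>0}\frac{1}{m(B_R)}\int_{B_R}|f(x+z)g(x-z)|\,dz$. *)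

theory Defs
  imports "HOL-Analysis.Analysis"
begin

fun iter_dderiv :: "'a::euclidean_space list \<Rightarrow> ('a \<Rightarrow> real) \<Rightarrow> 'a \<Rightarrow> real" where
  "iter_dderiv [] f = f"
| "iter_dderiv (v # vs) f = (\<lambda>x. frechet_derivative (iter_dderiv vs f) (at x) v)"

definition smooth :: "('a::euclidean_space \<Rightarrow> real) \<Rightarrow> bool" where
  "smooth f \<longleftrightarrow> (\<forall>vs x. iter_dderiv vs f differentiable (at x))"

definition compact_support :: "('a::euclidean_space \<Rightarrow> real) \<Rightarrow> bool" where
  "compact_support f \<longleftrightarrow> compact (closure {x. f x \<noteq> 0})"

definition grad_norm :: "('a::euclidean_space \<Rightarrow> real) \<Rightarrow> 'a \<Rightarrow> real" where
  "grad_norm f x = onorm (frechet_derivative f (at x))"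

definition bmax :: "('a::euclidean_space \<Rightarrow> real) \<Rightarrow> ('a \<Rightarrow> real) \<Rightarrow> 'a \<Rightarrow> real" where
  "bmax f g x = (SUP R\<in>{0<..}. (\<integral>z\<in>ball 0 R. \<bar>f (x + z) * g (x - z)\<bar> \<partial>lborel)
                               / measure lborel (ball (0::'a) R))"

(* integral over the segment from x to y w.r.t. 1-dim. Hausdorff measure,
   via arc-length parametrisation t \<mapsto> x + t (y - x), t\<in>[0,1] *)
definition segment_integral :: "('a::euclidean_space \<Rightarrow> real) \<Rightarrow> 'a \<Rightarrow> 'a \<Rightarrow> ennreal" where
  "segment_integral h x y =
     ennreal (dist x y) * (\<integral>\<^sup>+ t\<in>{0..1}. ennreal (h (x + t *\<^sub>R (y - x))) \<partial>lborel)"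

end

theory Submission
  imports Defs
begin


lemma smooth_diff: "smooth f \<Longrightarrow> iter_dderiv vs f differentiable (at x)"
  unfolding smooth_def by blast

lemma smooth_deriv:
  assumes "smooth f"
  shows "(f has_derivative frechet_derivative f (at x)) (at x)"
proof -
  have "f differentiable (at x)" using smooth_diff[OF assms, of "[]" x] by simp
  thus ?thesis by (simp add: frechet_derivative_works[symmetric])
qed

lemma smooth_dircont:
  assumes "smooth f"
  shows "continuous_on UNIV (\<lambda>x. frechet_derivative f (at x) v)"
proof -
  have "\<And>x. (\<lambda>x. frechet_derivative f (at x) v) differentiable (at x)"
    using smooth_diff[OF assms, of "[v]"] by simp
  thus ?thesis
    by (simp add: continuous_at_imp_continuous_on differentiable_imp_continuous_within)
qed

lemma smooth_cont:
  assumes "smooth f" shows "continuous_on UNIV f"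
  using smooth_deriv[OF assms]
  by (meson continuous_at_imp_continuous_on has_derivative_continuous)

lemma grad_norm_blinfun:
  assumes "smooth f"
  shows "grad_norm f x = norm (Blinfun (frechet_derivative f (at x)))"
  using smooth_deriv[OF assms, of x]
  by (simp add: grad_norm_def norm_blinfun.rep_eq bounded_linear_Blinfun_apply has_derivative_bounded_linear)

lemma grad_norm_cont:
  assumes "smooth f"
  shows "continuous_on UNIV (grad_norm f)"
proof -
  have "continuous_on UNIV (\<lambda>x. Blinfun (frechet_derivative f (at x)))"
  proof (rule continuous_on_blinfun_componentwise)
    fix i :: 'a
    have eq: "(\<lambda>x. Blinfun (frechet_derivative f (at x)) i) = (\<lambda>x. frechet_derivative f (at x) i)"
    proof
      fix x show "Blinfun (frechet_derivative f (at x)) i = frechet_derivative f (at x) i"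
        using smooth_deriv[OF assms, of x]
        by (simp add: bounded_linear_Blinfun_apply has_derivative_bounded_linear)
    qed
    show "continuous_on UNIV (\<lambda>x. Blinfun (frechet_derivative f (at x)) i)"
      unfolding eq by (rule smooth_dircont[OF assms])
  qed
  then have "continuous_on UNIV (\<lambda>x. norm (Blinfun (frechet_derivative f (at x))))"
    by (rule continuous_on_norm)
  thus ?thesis using grad_norm_blinfun[OF assms] by simp
qed

lemma grad_norm_nonneg: "smooth f \<Longrightarrow> grad_norm f x \<ge> 0"
  by (simp add: grad_norm_blinfun)

lemma cs_zero: "x \<notin> closure {x. f x \<noteq> 0} \<Longrightarrow> f x = 0"
proof (rule ccontr)
  assume a: "x \<notin> closure {x. f x \<noteq> 0}" "f x \<noteq> 0"
  then have "x \<in> {x. f x \<noteq> 0}" by simp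
  then have "x \<in> closure {x. f x \<noteq> 0}" using closure_subset by (rule subsetD[rotated])
  with a show False by simp
qed

lemma grad_norm_zero:
  assumes "smooth f" "x \<notin> closure {x. f x \<noteq> 0}"
  shows "grad_norm f x = 0"
proof -
  let ?K = "closure {x. f x \<noteq> 0}"
  have op: "open (- ?K)" by (intro open_Compl closed_closure)
  have "((\<lambda>_. 0::real) has_derivative (\<lambda>_. 0)) (at x)" by simp
  then have "(f has_derivative (\<lambda>_. 0)) (at x)"
  proof (rule has_derivative_transform_within_open[OF _ op])
    show "x \<in> - ?K" using assms(2) by simp
    fix y assume "y \<in> - ?K"
    then show "0 = f y" using cs_zero[of y f] by simp
  qed
  then have "frechet_derivative f (at x) = (\<lambda>_. 0)"
    by (rule frechet_derivative_at[symmetric])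
  thus ?thesis by (simp add: grad_norm_def onorm_zero)
qed

lemma cs_bounded:
  fixes h :: "'a::euclidean_space \<Rightarrow> real"
  assumes "continuous_on UNIV h" "compact K" "\<And>x. x \<notin> K \<Longrightarrow> h x = 0"
  shows "\<exists>B. \<forall>x. \<bar>h x\<bar> \<le> B"
proof -
  have "compact (h ` K)"
    by (rule compact_continuous_image[OF continuous_on_subset[OF assms(1)] assms(2)]) simp
  then have "bounded (h ` K)" by (rule compact_imp_bounded)
  then obtain B where B: "\<And>y. y \<in> h ` K \<Longrightarrow> norm y \<le> B" unfolding bounded_iff by blast
  have "\<bar>h x\<bar> \<le> max B 0" for x
  proof (cases "x \<in> K")
    case True then show ?thesis using B[of "h x"] by simp
  next
    case False then show ?thesis using assms(3) by simp
  qed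
  thus ?thesis by blast
qed



lemma ball_meas_pos: "(R::real) > 0 \<Longrightarrow> measure lborel (ball (0::'a::euclidean_space) R) > 0"
  using content_ball_pos by blast

lemma ball_emeas_fin: "emeasure lborel (ball (0::'a::euclidean_space) R) \<noteq> \<infinity>"
  using emeasure_bounded_finite[of "ball (0::'a) R"] by simp

lemma cont_set_integrable_ball:
  fixes F :: "'a::euclidean_space \<Rightarrow> real"
  assumes "continuous_on UNIV F"
  shows "set_integrable lborel (ball c R) F"
proof -
  have "set_integrable lborel (cball c R) F"
    unfolding set_integrable_def
    by (rule borel_integrable_compact) (auto intro: continuous_on_subset[OF assms])
  thus ?thesis
    by (rule set_integrable_subset) auto
qed

lemma avg_bound:
  fixes u v :: "'a::euclidean_space \<Rightarrow> real"
  assumes cu: "continuous_on UNIV u" and cv: "continuous_on UNIV v"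
    and bu: "\<And>x. \<bar>u x\<bar> \<le> Bu" and bv: "\<And>x. \<bar>v x\<bar> \<le> Bv" and R: "R > 0"
  shows "(\<integral>z\<in>ball 0 R. \<bar>u (w + z) * v (w - z)\<bar> \<partial>lborel) / measure lborel (ball (0::'a) R) \<le> Bu * Bv"
proof -
  have ci: "continuous_on UNIV (\<lambda>z. \<bar>u (w + z) * v (w - z)\<bar>)"
    by (intro continuous_intros continuous_on_compose2[OF cu] continuous_on_compose2[OF cv]) auto
  have i1: "set_integrable lborel (ball 0 R) (\<lambda>z. \<bar>u (w + z) * v (w - z)\<bar>)"
      by (rule cont_set_integrable_ball[OF ci])
  have i2: "set_integrable lborel (ball (0::'a) R) (\<lambda>z. Bu * Bv)"
      by (rule cont_set_integrable_ball) simp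
  have le: "\<And>z. \<bar>u (w + z) * v (w - z)\<bar> \<le> Bu * Bv"
      unfolding abs_mult by (intro mult_mono bu bv) (use bu[of 0] in auto)
  have "(\<integral>z\<in>ball 0 R. \<bar>u (w + z) * v (w - z)\<bar> \<partial>lborel) \<le> (\<integral>z\<in>ball (0::'a) R. Bu * Bv \<partial>lborel)"
    using set_integral_mono[OF i1 i2 le] by simp
  also have "\<dots> = measure lborel (ball (0::'a) R) * (Bu * Bv)"
    using set_integral_const[of "ball (0::'a) R" lborel "Bu*Bv"] ball_emeas_fin[of R] by simp
  finally show ?thesis using ball_meas_pos[OF R, where 'a='a]
    by (simp add: divide_le_eq mult.commute)
qed

lemma avg_le_bmax:
  fixes u v :: "'a::euclidean_space \<Rightarrow> real"
  assumes cu: "continuous_on UNIV u" and cv: "continuous_on UNIV v"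
    and bu: "\<And>x. \<bar>u x\<bar> \<le> Bu" and bv: "\<And>x. \<bar>v x\<bar> \<le> Bv" and R: "R > 0"
  shows "(\<integral>z\<in>ball 0 R. \<bar>u (w + z) * v (w - z)\<bar> \<partial>lborel) / measure lborel (ball (0::'a) R) \<le> bmax u v w"
  unfolding bmax_def
proof (rule cSUP_upper)
  show "R \<in> {0<..}" using R by simp
  show "bdd_above ((\<lambda>R. (\<integral>z\<in>ball 0 R. \<bar>u (w + z) * v (w - z)\<bar> \<partial>lborel) / measure lborel (ball (0::'a) R)) ` {0<..})"
    by (rule bdd_aboveI2[where M="Bu*Bv"]) (use avg_bound[OF cu cv bu bv] in auto)
qed

lemma bmax_le:
  fixes u v :: "'a::euclidean_space \<Rightarrow> real"
  assumes "\<And>R. R > 0 \<Longrightarrow> (\<integral>z\<in>ball 0 R. \<bar>u (w + z) * v (w - z)\<bar> \<partial>lborel) / measure lborel (ball (0::'a) R) \<le> C"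
  shows "bmax u v w \<le> C"
  unfolding bmax_def by (rule cSUP_least) (use assms in auto)



lemma comp_line_deriv:
  assumes "smooth f"
  shows "((\<lambda>t. f (a + t *\<^sub>R v)) has_real_derivative frechet_derivative f (at (a + t *\<^sub>R v)) v) (at t)"
proof -
  have d1: "((\<lambda>t. a + t *\<^sub>R v) has_derivative (\<lambda>s. s *\<^sub>R v)) (at t)"
    by (auto intro!: derivative_eq_intros)
  have d2: "(f has_derivative frechet_derivative f (at (a + t *\<^sub>R v))) (at (a + t *\<^sub>R v))"
    by (rule smooth_deriv[OF assms])
  have "((\<lambda>t. f (a + t *\<^sub>R v)) has_derivative (\<lambda>s. frechet_derivative f (at (a + t *\<^sub>R v)) (s *\<^sub>R v))) (at t)"
    using has_derivative_compose[OF d1 d2] by (simp add: o_def)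
  moreover have "(\<lambda>s. frechet_derivative f (at (a + t *\<^sub>R v)) (s *\<^sub>R v)) = (*) (frechet_derivative f (at (a + t *\<^sub>R v)) v)"
    using linear.scaleR[OF bounded_linear.linear[OF has_derivative_bounded_linear[OF d2]]]
    by (auto simp: mult.commute)
  ultimately show ?thesis by (simp add: has_field_derivative_def)
qed

lemma deriv_bound:
  assumes "smooth f"
  shows "\<bar>frechet_derivative f (at p) v\<bar> \<le> grad_norm f p * norm v"
  using onorm[OF has_derivative_bounded_linear[OF smooth_deriv[OF assms]]]
  by (simp add: grad_norm_def)

lemma ftc_bound:
  fixes f g :: "'a::euclidean_space \<Rightarrow> real"
  assumes sf: "smooth f" and sg: "smooth g" and f0: "\<And>x. f x \<ge> 0" and g0: "\<And>x. g x \<ge> 0"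
  shows "\<bar>f (y + z) * g (y - z) - f (x + z) * g (x - z)\<bar> \<le>
    integral {0..1} (\<lambda>t. norm (y - x) * (grad_norm f (x + t *\<^sub>R (y - x) + z) * g (x + t *\<^sub>R (y - x) - z)
        + f (x + t *\<^sub>R (y - x) + z) * grad_norm g (x + t *\<^sub>R (y - x) - z)))"
proof -
  define v where "v = y - x"
  define a where "a = x + z"
  define b where "b = x - z"
  have pa: "\<And>t. x + t *\<^sub>R v + z = a + t *\<^sub>R v" "\<And>t. x + t *\<^sub>R v - z = b + t *\<^sub>R v"
    by (simp_all add: a_def b_def algebra_simps)
  define Df where "Df t = frechet_derivative f (at (a + t *\<^sub>R v)) v" for t
  define Dg where "Dg t = frechet_derivative g (at (b + t *\<^sub>R v)) v" for t
  define \<phi> where "\<phi> t = f (a + t *\<^sub>R v) * g (b + t *\<^sub>R v)" for t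
  have der: "\<And>t. (\<phi> has_real_derivative (Df t * g (b + t *\<^sub>R v) + Dg t * f (a + t *\<^sub>R v))) (at t)"
    unfolding \<phi>_def Df_def Dg_def
    by (rule DERIV_mult[OF comp_line_deriv[OF sf] comp_line_deriv[OF sg]])
  have "((\<lambda>t. Df t * g (b + t *\<^sub>R v) + Dg t * f (a + t *\<^sub>R v)) has_integral (\<phi> 1 - \<phi> 0)) {0..1}"
    by (rule fundamental_theorem_of_calculus)
       (auto simp: has_real_derivative_iff_has_vector_derivative[symmetric] intro: DERIV_subset[OF der])
  then have int1: "(\<lambda>t. Df t * g (b + t *\<^sub>R v) + Dg t * f (a + t *\<^sub>R v)) integrable_on {0..1}"
    and eq1: "integral {0..1} (\<lambda>t. Df t * g (b + t *\<^sub>R v) + Dg t * f (a + t *\<^sub>R v)) = \<phi> 1 - \<phi> 0"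
    by (auto simp: integral_unique has_integral_integrable)
  define G where "G t = norm v * (grad_norm f (a + t *\<^sub>R v) * g (b + t *\<^sub>R v) + f (a + t *\<^sub>R v) * grad_norm g (b + t *\<^sub>R v))" for t
  have cG: "continuous_on {0..1} G"
    unfolding G_def
    by (intro continuous_intros continuous_on_compose2[OF grad_norm_cont[OF sf]] continuous_on_compose2[OF grad_norm_cont[OF sg]]
         continuous_on_compose2[OF smooth_cont[OF sf]] continuous_on_compose2[OF smooth_cont[OF sg]]) auto
  have int2: "G integrable_on {0..1}" using cG integrable_continuous_real by blast
  have bnd: "norm (Df t * g (b + t *\<^sub>R v) + Dg t * f (a + t *\<^sub>R v)) \<le> G t" for t
  proof -
    have "\<bar>Df t * g (b + t *\<^sub>R v) + Dg t * f (a + t *\<^sub>R v)\<bar> \<le> \<bar>Df t\<bar> * g (b + t *\<^sub>R v) + \<bar>Dg t\<bar> * f (a + t *\<^sub>R v)"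
      using f0 g0 by (metis (no_types, lifting) abs_mult abs_of_nonneg abs_triangle_ineq)
    also have "\<dots> \<le> (grad_norm f (a + t *\<^sub>R v) * norm v) * g (b + t *\<^sub>R v) + (grad_norm g (b + t *\<^sub>R v) * norm v) * f (a + t *\<^sub>R v)"
      unfolding Df_def Dg_def
      by (intro add_mono mult_right_mono deriv_bound[OF sf] deriv_bound[OF sg] f0 g0)
    also have "\<dots> = G t" by (simp add: G_def algebra_simps)
    finally show ?thesis by simp
  qed
  have "norm (\<phi> 1 - \<phi> 0) \<le> integral {0..1} G"
    using integral_norm_bound_integral[OF int1 int2 bnd] eq1 by simp
  moreover have "\<phi> 1 = f (y + z) * g (y - z)" "\<phi> 0 = f (x + z) * g (x - z)"
    by (simp_all add: \<phi>_def a_def b_def v_def algebra_simps)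
  moreover have "G = (\<lambda>t. norm (y - x) * (grad_norm f (x + t *\<^sub>R (y - x) + z) * g (x + t *\<^sub>R (y - x) - z)
        + f (x + t *\<^sub>R (y - x) + z) * grad_norm g (x + t *\<^sub>R (y - x) - z)))"
    by (rule ext) (simp add: G_def a_def b_def v_def algebra_simps)
  ultimately show ?thesis by simp
qed



lemma set_nn_eq:
  fixes F :: "'a::euclidean_space \<Rightarrow> real"
  assumes "set_integrable lborel A F" "\<And>z. z \<in> A \<Longrightarrow> F z \<ge> 0"
  shows "(\<integral>\<^sup>+ z. ennreal (indicator A z * F z) \<partial>lborel) = ennreal (\<integral>z\<in>A. F z \<partial>lborel)"
proof -
  have "(\<integral>\<^sup>+ z. ennreal (indicator A z *\<^sub>R F z) \<partial>lborel) = ennreal (\<integral>z. indicator A z *\<^sub>R F z \<partial>lborel)"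
    using assms(1) unfolding set_integrable_def
    by (rule nn_integral_eq_integral) (auto intro!: AE_I2 simp: indicator_def assms(2))
  thus ?thesis by (simp add: set_lebesgue_integral_def)
qed

lemma cont_plus:
  fixes u :: "'a::euclidean_space \<Rightarrow> real"
  assumes "continuous_on UNIV u"
  shows "continuous_on UNIV (\<lambda>p::real \<times> 'a. u (x + fst p *\<^sub>R (y - x) + snd p))"
  by (intro continuous_on_compose2[OF assms] continuous_intros) auto

lemma cont_minus:
  fixes u :: "'a::euclidean_space \<Rightarrow> real"
  assumes "continuous_on UNIV u"
  shows "continuous_on UNIV (\<lambda>p::real \<times> 'a. u (x + fst p *\<^sub>R (y - x) - snd p))"
  by (intro continuous_on_compose2[OF assms] continuous_intros) auto

lemma per_R:
  fixes f g :: "'a::euclidean_space \<Rightarrow> real"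
  assumes sf: "smooth f" and sg: "smooth g" and csf: "compact_support f" and csg: "compact_support g"
    and f0: "\<And>x. f x \<ge> 0" and g0: "\<And>x. g x \<ge> 0" and R: "R > 0"
  shows "ennreal \<bar>(\<integral>z\<in>ball 0 R. \<bar>f (x + z) * g (x - z)\<bar> \<partial>lborel) / measure lborel (ball (0::'a) R)
              - (\<integral>z\<in>ball 0 R. \<bar>f (y + z) * g (y - z)\<bar> \<partial>lborel) / measure lborel (ball (0::'a) R)\<bar>
     \<le> segment_integral (\<lambda>z. bmax f (grad_norm g) z + bmax (grad_norm f) g z) x y"
proof (cases "x = y")
  case True thus ?thesis by simp
next
  case False
  define B where "B = ball (0::'a) R"
  define m where "m = measure lborel B"
  define d where "d = norm (y - x)"
  have m0: "m > 0" unfolding m_def B_def by (rule ball_meas_pos[OF R])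
  have d0: "d > 0" using False by (simp add: d_def)
  define h where "h = (\<lambda>z. bmax f (grad_norm g) z + bmax (grad_norm f) g z)"
  define G where "G t z = grad_norm f (x + t *\<^sub>R (y - x) + z) * g (x + t *\<^sub>R (y - x) - z)
      + f (x + t *\<^sub>R (y - x) + z) * grad_norm g (x + t *\<^sub>R (y - x) - z)" for t z
  have cf: "continuous_on UNIV f" by (rule smooth_cont[OF sf])
  have cg: "continuous_on UNIV g" by (rule smooth_cont[OF sg])
  have cgf: "continuous_on UNIV (grad_norm f)" by (rule grad_norm_cont[OF sf])
  have cgg: "continuous_on UNIV (grad_norm g)" by (rule grad_norm_cont[OF sg])
  obtain Bf where Bf: "\<And>x. \<bar>f x\<bar> \<le> Bf"
    using cs_bounded[OF cf csf[unfolded compact_support_def] cs_zero[of _ f]] by blast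
  obtain Bg where Bg: "\<And>x. \<bar>g x\<bar> \<le> Bg"
    using cs_bounded[OF cg csg[unfolded compact_support_def] cs_zero[of _ g]] by blast
  obtain Bgf where Bgf: "\<And>x. \<bar>grad_norm f x\<bar> \<le> Bgf"
    using cs_bounded[OF cgf csf[unfolded compact_support_def] grad_norm_zero[OF sf]] by blast
  obtain Bgg where Bgg: "\<And>x. \<bar>grad_norm g x\<bar> \<le> Bgg"
    using cs_bounded[OF cgg csg[unfolded compact_support_def] grad_norm_zero[OF sg]] by blast
  have gnf0: "\<And>x. grad_norm f x \<ge> 0" using grad_norm_nonneg[OF sf] .
  have gng0: "\<And>x. grad_norm g x \<ge> 0" using grad_norm_nonneg[OF sg] .
  have G0: "G t z \<ge> 0" for t z unfolding G_def using f0 g0 gnf0 gng0 by simp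
  have cG: "continuous_on UNIV (\<lambda>p. G (fst p) (snd p))"
    unfolding G_def
    by (intro continuous_on_add continuous_on_mult cont_plus cont_minus cf cg cgf cgg)
  have cGt: "continuous_on UNIV (\<lambda>t. G t z)" for z
    using continuous_on_compose2[OF cG continuous_on_Pair[OF continuous_on_id continuous_on_const[of UNIV z]]] by simp
  have cGz: "continuous_on UNIV (\<lambda>z. G t z)" for t
    using continuous_on_compose2[OF cG continuous_on_Pair[OF continuous_on_const[of UNIV t] continuous_on_id]] by simp
  define \<psi> where "\<psi> z = f (y + z) * g (y - z) - f (x + z) * g (x - z)" for z
  have c\<psi>: "continuous_on UNIV \<psi>" unfolding \<psi>_def
    by (intro continuous_intros continuous_on_compose2[OF cf] continuous_on_compose2[OF cg]) auto
  define Ix where "Ix = (\<integral>z\<in>B. \<bar>f (x + z) * g (x - z)\<bar> \<partial>lborel)"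
  define Iy where "Iy = (\<integral>z\<in>B. \<bar>f (y + z) * g (y - z)\<bar> \<partial>lborel)"
  have ix: "set_integrable lborel B (\<lambda>z. \<bar>f (x + z) * g (x - z)\<bar>)" unfolding B_def
    by (intro cont_set_integrable_ball continuous_intros continuous_on_compose2[OF cf] continuous_on_compose2[OF cg]) auto
  have iy: "set_integrable lborel B (\<lambda>z. \<bar>f (y + z) * g (y - z)\<bar>)" unfolding B_def
    by (intro cont_set_integrable_ball continuous_intros continuous_on_compose2[OF cf] continuous_on_compose2[OF cg]) auto
  have "Iy - Ix = (\<integral>z\<in>B. \<psi> z \<partial>lborel)"
    unfolding Ix_def Iy_def \<psi>_def using set_integral_diff(2)[OF iy ix] f0 g0 by simp
  then have step1: "\<bar>Ix - Iy\<bar> \<le> (\<integral>z\<in>B. \<bar>\<psi> z\<bar> \<partial>lborel)"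
    using set_integral_norm_bound[OF cont_set_integrable_ball[OF c\<psi>, of 0 R]] unfolding B_def
    by (simp add: abs_minus_commute)
  define \<Phi> where "\<Phi> z = integral {0..1} (\<lambda>t. G t z) / m" for z
  have has\<Phi>: "((\<lambda>t. G t z / m) has_integral \<Phi> z) {0..1}" for z
    unfolding \<Phi>_def
    by (rule has_integral_divide, rule integrable_integral, rule integrable_continuous_real)
       (rule continuous_on_subset[OF cGt], simp)
  have pz: "\<bar>\<psi> z\<bar> / (m * d) \<le> \<Phi> z" for z
  proof -
    have "\<bar>\<psi> z\<bar> \<le> integral {0..1} (\<lambda>t. d * G t z)"
      using ftc_bound[OF sf sg f0 g0, of y z x] unfolding \<psi>_def G_def d_def .
    also have "\<dots> = d * integral {0..1} (\<lambda>t. G t z)" by simp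
    finally show ?thesis unfolding \<Phi>_def using m0 d0
      by (simp add: divide_le_eq field_simps)
  qed
  have i\<psi>: "set_integrable lborel B (\<lambda>z. \<bar>\<psi> z\<bar> / (m * d))" unfolding B_def
    by (intro cont_set_integrable_ball continuous_intros c\<psi>) (use m0 d0 in auto)
  define J where "J = (\<integral>\<^sup>+ t\<in>{0..1}. ennreal (h (x + t *\<^sub>R (y - x))) \<partial>lborel)"
  have meas: "case_prod (\<lambda>t z. ennreal (indicator {0..1} t * (indicator B z * (G t z / m))))
      \<in> borel_measurable (lborel \<Otimes>\<^sub>M lborel)"
  proof -
    have [measurable]: "(\<lambda>p. G (fst p) (snd p)) \<in> borel_measurable borel"
      by (rule borel_measurable_continuous_onI[OF cG])
    have [measurable]: "B \<in> sets borel" unfolding B_def by simp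
    have mf: "(fst :: real \<times> 'a \<Rightarrow> real) \<in> borel_measurable borel"
      by (rule borel_measurable_continuous_onI) (intro continuous_intros)
    have ms: "(snd :: real \<times> 'a \<Rightarrow> 'a) \<in> borel \<rightarrow>\<^sub>M borel"
      by (rule borel_measurable_continuous_onI) (intro continuous_intros)
    have [measurable]: "(\<lambda>p::real \<times> 'a. indicator {0..1} (fst p) :: real) \<in> borel_measurable borel"
      by (rule measurable_compose[OF mf, of "indicator {0..1}"]) simp
    have [measurable]: "(\<lambda>p::real \<times> 'a. indicator B (snd p) :: real) \<in> borel_measurable borel"
      by (rule measurable_compose[OF ms, of "indicator B"]) simp
    have "(\<lambda>p::real \<times> 'a. ennreal (indicator {0..1} (fst p) * (indicator B (snd p) * (G (fst p) (snd p) / m))))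
       \<in> borel_measurable borel"
      by measurable
    thus ?thesis unfolding lborel_prod by (simp add: case_prod_beta')
  qed
  have "ennreal (\<integral>z\<in>B. \<bar>\<psi> z\<bar> / (m * d) \<partial>lborel)
      = (\<integral>\<^sup>+ z. ennreal (indicator B z * (\<bar>\<psi> z\<bar> / (m * d))) \<partial>lborel)"
    using set_nn_eq[OF i\<psi>] m0 d0 by simp
  also have "\<dots> \<le> (\<integral>\<^sup>+ z. ennreal (indicator B z * \<Phi> z) \<partial>lborel)"
    by (intro nn_integral_mono ennreal_leI mult_left_mono pz) simp
  also have "\<dots> = (\<integral>\<^sup>+ z. (\<integral>\<^sup>+ t. ennreal (indicator {0..1} t * (indicator B z * (G t z / m))) \<partial>lborel) \<partial>lborel)"
  proof (intro nn_integral_cong)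
    fix z :: 'a
    show "ennreal (indicator B z * \<Phi> z) = (\<integral>\<^sup>+ t. ennreal (indicator {0..1} t * (indicator B z * (G t z / m))) \<partial>lborel)"
    proof (cases "z \<in> B")
      case True
      then show ?thesis
        using nn_integral_has_integral_lebesgue[OF _ has\<Phi>[of z]] G0 m0 by simp
    next
      case False
      then show ?thesis by simp
    qed
  qed
  also have "\<dots> = (\<integral>\<^sup>+ t. (\<integral>\<^sup>+ z. ennreal (indicator {0..1} t * (indicator B z * (G t z / m))) \<partial>lborel) \<partial>lborel)"
    by (rule lborel_pair.Fubini'[OF meas])
  also have "\<dots> \<le> J"
    unfolding J_def
  proof (intro nn_integral_mono)
    fix t :: real
    show "(\<integral>\<^sup>+ z. ennreal (indicator {0..1} t * (indicator B z * (G t z / m))) \<partial>lborel)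
        \<le> ennreal (h (x + t *\<^sub>R (y - x))) * indicator {0..1} t"
    proof (cases "t \<in> {0..1}")
      case False then show ?thesis by simp
    next
      case True
      define w where "w = x + t *\<^sub>R (y - x)"
      have i1: "set_integrable lborel B (\<lambda>z. \<bar>grad_norm f (w + z) * g (w - z)\<bar>)" unfolding B_def
        by (intro cont_set_integrable_ball continuous_intros continuous_on_compose2[OF cgf] continuous_on_compose2[OF cg]) auto
      have i2: "set_integrable lborel B (\<lambda>z. \<bar>f (w + z) * grad_norm g (w - z)\<bar>)" unfolding B_def
        by (intro cont_set_integrable_ball continuous_intros continuous_on_compose2[OF cf] continuous_on_compose2[OF cgg]) auto
      have Geq: "G t z = \<bar>grad_norm f (w + z) * g (w - z)\<bar> + \<bar>f (w + z) * grad_norm g (w - z)\<bar>" for z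
        unfolding G_def w_def using f0 g0 gnf0 gng0 by simp
      have iG: "set_integrable lborel B (\<lambda>z. G t z / m)" unfolding B_def
        by (intro cont_set_integrable_ball continuous_intros cGz) (use m0 in auto)
      have "(\<integral>\<^sup>+ z. ennreal (indicator {0..1} t * (indicator B z * (G t z / m))) \<partial>lborel)
          = (\<integral>\<^sup>+ z. ennreal (indicator B z * (G t z / m)) \<partial>lborel)"
        using True by simp
      also have "\<dots> = ennreal (\<integral>z\<in>B. G t z / m \<partial>lborel)"
        by (rule set_nn_eq[OF iG]) (use G0 m0 in simp)
      also have "(\<integral>z\<in>B. G t z / m \<partial>lborel)
          = (\<integral>z\<in>B. \<bar>grad_norm f (w + z) * g (w - z)\<bar> \<partial>lborel) / m
            + (\<integral>z\<in>B. \<bar>f (w + z) * grad_norm g (w - z)\<bar> \<partial>lborel) / m"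
        unfolding Geq set_integral_divide_zero set_integral_add(2)[OF i1 i2] by (simp add: add_divide_distrib)
      also have "\<dots> \<le> bmax (grad_norm f) g w + bmax f (grad_norm g) w"
        unfolding m_def B_def
        by (intro add_mono avg_le_bmax[OF cgf cg Bgf Bg R] avg_le_bmax[OF cf cgg Bf Bgg R])
      also have "\<dots> = h w" by (simp add: h_def)
      finally show ?thesis using True by (simp add: w_def ennreal_leI)
    qed
  qed
  finally have main: "ennreal (\<integral>z\<in>B. \<bar>\<psi> z\<bar> / (m * d) \<partial>lborel) \<le> J" .
  have "\<bar>Ix / m - Iy / m\<bar> = \<bar>(Ix - Iy) / m\<bar>"
    by (simp only: diff_divide_distrib)
  also have "\<dots> = \<bar>Ix - Iy\<bar> / m"
    using m0 by (simp only: abs_divide abs_of_pos)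
  also have "\<dots> = d * (\<bar>Ix - Iy\<bar> / (m * d))"
    using d0 by simp
  also have "\<dots> \<le> d * ((\<integral>z\<in>B. \<bar>\<psi> z\<bar> \<partial>lborel) / (m * d))"
    using step1 m0 d0 by (intro mult_left_mono divide_right_mono) simp_all
  also have "(\<integral>z\<in>B. \<bar>\<psi> z\<bar> \<partial>lborel) / (m * d) = (\<integral>z\<in>B. \<bar>\<psi> z\<bar> / (m * d) \<partial>lborel)"
    by (rule set_integral_divide_zero[symmetric])
  finally have le: "\<bar>Ix / m - Iy / m\<bar> \<le> d * (\<integral>z\<in>B. \<bar>\<psi> z\<bar> / (m * d) \<partial>lborel)" .
  have "ennreal \<bar>Ix / m - Iy / m\<bar> \<le> ennreal (d * (\<integral>z\<in>B. \<bar>\<psi> z\<bar> / (m * d) \<partial>lborel))"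
    using le by (rule ennreal_leI)
  also have "\<dots> = ennreal d * ennreal (\<integral>z\<in>B. \<bar>\<psi> z\<bar> / (m * d) \<partial>lborel)"
    using d0 by (intro ennreal_mult') simp
  also have "\<dots> \<le> ennreal d * J"
    by (rule mult_left_mono[OF main]) simp
  also have "\<dots> = segment_integral h x y"
    by (simp add: segment_integral_def J_def d_def dist_norm norm_minus_commute)
  finally show ?thesis unfolding Ix_def Iy_def m_def B_def h_def .
qed



theorem mainTheorem2:
  fixes f g :: "'a::euclidean_space \<Rightarrow> real"
  assumes "smooth f" "smooth g" "compact_support f" "compact_support g"
    and "\<And>x. f x \<ge> 0" "\<And>x. g x \<ge> 0"
  shows "ennreal \<bar>bmax f g x - bmax f g y\<bar> \<le>
         segment_integral (\<lambda>z. bmax f (grad_norm g) z + bmax (grad_norm f) g z) x y"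
proof -
  note sf = assms(1) and sg = assms(2) and csf = assms(3) and csg = assms(4)
  define I where "I = segment_integral (\<lambda>z. bmax f (grad_norm g) z + bmax (grad_norm f) g z) x y"
  define A where "A w R = (\<integral>z\<in>ball 0 R. \<bar>f (w + z) * g (w - z)\<bar> \<partial>lborel) / measure lborel (ball (0::'a) R)" for w R
  have cf: "continuous_on UNIV f" by (rule smooth_cont[OF sf])
  have cg: "continuous_on UNIV g" by (rule smooth_cont[OF sg])
  obtain Bf where Bf: "\<And>x. \<bar>f x\<bar> \<le> Bf"
    using cs_bounded[OF cf csf[unfolded compact_support_def] cs_zero[of _ f]] by blast
  obtain Bg where Bg: "\<And>x. \<bar>g x\<bar> \<le> Bg"
    using cs_bounded[OF cg csg[unfolded compact_support_def] cs_zero[of _ g]] by blast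
  show ?thesis
  proof (cases "I = \<infinity>")
    case True then show ?thesis by (simp add: I_def)
  next
    case False
    then obtain r where r: "I = ennreal r" "r \<ge> 0" by (cases I) auto
    have pR: "\<bar>A x R - A y R\<bar> \<le> r" if "R > 0" for R
      using per_R[OF assms that, of x y] r unfolding A_def I_def[symmetric]
      by (simp add: ennreal_le_iff)
    have Ab: "A w R \<le> bmax f g w" if "R > 0" for w R
      unfolding A_def by (rule avg_le_bmax[OF cf cg Bf Bg that])
    have 1: "bmax f g x \<le> bmax f g y + r"
    proof (rule bmax_le)
      fix R :: real assume R: "R > 0"
      have "A x R \<le> bmax f g y + r" using pR[OF R] Ab[OF R, of y] by linarith
      thus "(\<integral>z\<in>ball 0 R. \<bar>f (x + z) * g (x - z)\<bar> \<partial>lborel) / measure lborel (ball (0::'a) R) \<le> bmax f g y + r"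
        unfolding A_def .
    qed
    have 2: "bmax f g y \<le> bmax f g x + r"
    proof (rule bmax_le)
      fix R :: real assume R: "R > 0"
      have "A y R \<le> bmax f g x + r" using pR[OF R] Ab[OF R, of x] by linarith
      thus "(\<integral>z\<in>ball 0 R. \<bar>f (y + z) * g (y - z)\<bar> \<partial>lborel) / measure lborel (ball (0::'a) R) \<le> bmax f g x + r"
        unfolding A_def .
    qed
    from 1 2 have "\<bar>bmax f g x - bmax f g y\<bar> \<le> r" by simp
    then show ?thesis unfolding I_def[symmetric] r(1) by (rule ennreal_leI)
  qed
qed


end
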